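(* Let $I$ be a non-empty set, let $\overline{D}=\{z\in\mathbb{C}:|z|\le1\}$, and equip $\overline{D}^I$ with the product topology. Let $f:\overline{D}^I\to\mathbb{C}$ be a function. Then there exists a sequence $(p_n)_{n\ge1}$ of polynomials on $\overline{D}^I$ converging uniformly to $f$ on $\overline{D}^I$ (with respect to the usual Euclidean metric of $\mathbb{C}$) if and only if both of the following hold: (a) $f$ is continuous on $\overline{D}^I$; (b) for every $i_0\in I$ and every $z=(z_i)_{i\in I}\in\overline{D}^I$, the function $\overline{D}\ni w\mapsto f(\zeta(w))\in\mathbb{C}$ belongs to $A(\overline{D})$, where $\zeta(w)_{i_0}=w$ and $\zeta(w)_i=z_i$ for all $i\in I\setminus\{i_0\}$.
   Context: A polynomial on $\overline{D}^I$ is a finite sum of monomials $c\, z_{i_1}^{k_1}\cdots z_{i_M}^{k_M}$ with $c\in\mathbb{C}$, $M\in\mathbb{N}$, $i_1,\dots,i_M\in I$, $k_1,\dots,k_M\in\mathbb{N}$, evaluated at $z=(z_i)_{i\in I}\in\overline{D}^I$; thus each polynomial depends on only finitely many coordinates. $A(\overline{D})$ denotes the disc algebra: functions $\overline{D}\to\mathbb{C}$ continuous on $\overline{D}$ and holomorphic in the open unit disc $D$. *)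

theory Defs
  imports "HOL-Complex_Analysis.Complex_Analysis"
begin

text \<open>The closed polydisc: points z = (z_i) indexed by the type 'i (the index set I,
  automatically non-empty), with every coordinate in the closed unit disc.
  Functions 'i => complex carry the product topology (Function_Topology).\<close>
definition polydisc :: "('i \<Rightarrow> complex) set" where
  "polydisc = {z. \<forall>i. z i \<in> cball 0 1}"

definition monomial_fun :: "complex \<Rightarrow> ('i \<times> nat) list \<Rightarrow> ('i \<Rightarrow> complex) \<Rightarrow> complex" where
  "monomial_fun c xs = (\<lambda>z. c * prod_list (map (\<lambda>(i,k). z i ^ k) xs))"

definition poly_funs :: "(('i \<Rightarrow> complex) \<Rightarrow> complex) set" where
  "poly_funs = {p. \<exists>ms :: (complex \<times> ('i \<times> nat) list) list.
      p = (\<lambda>z. sum_list (map (\<lambda>(c, xs). monomial_fun c xs z) ms))}"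

definition disc_algebra :: "(complex \<Rightarrow> complex) set" where
  "disc_algebra = {g. continuous_on (cball 0 1) g \<and> g holomorphic_on ball 0 1}"

end

theory Submission
  imports Defs
begin


definition rou :: "nat \<Rightarrow> complex" where
  "rou K = exp (2 * of_real pi * \<i> / of_nat K)"

lemma rou_pow: "rou K ^ j = exp (2 * of_real pi * \<i> * of_nat j / of_nat K)"
  unfolding rou_def by (simp add: exp_of_nat_mult[symmetric] mult_ac)

lemma norm_rou_pow [simp]: "norm (rou K ^ j) = 1"
  unfolding rou_pow by (simp add: norm_exp_eq_Re)

lemma norm_rou [simp]: "norm (rou K) = 1"
  using norm_rou_pow[of K 1] by simp

lemma rou_pow_eq_1_iff:
  assumes "K > 0"
  shows "rou K ^ j = 1 \<longleftrightarrow> K dvd j"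
proof
  assume "rou K ^ j = 1"
  moreover have "2 * of_real pi * \<i> * of_nat j / of_nat K = \<i> * complex_of_real (2 * pi * real j / real K)"
    by simp
  ultimately obtain n :: int where n: "2 * pi * real j / real K = of_int (2*n) * pi"
    unfolding rou_pow exp_eq_1 by auto
  then have "real j = of_int n * real K" using assms
    by (auto simp: field_simps)
  then have "int j = n * int K"
    by (metis of_int_eq_iff of_int_mult of_int_of_nat_eq)
  then show "K dvd j"
    by (metis dvd_triv_right int_dvd_int_iff dvd_def)
next
  assume "K dvd j"
  then obtain c where "j = K * c" by auto
  then have "rou K ^ j = exp (2 * of_real pi * \<i> * of_nat c)" using assms
    unfolding rou_pow by (simp add: field_simps)
  also have "\<dots> = 1"
    unfolding exp_eq_1 by (auto intro!: exI[of _ "int c"])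
  finally show "rou K ^ j = 1" .
qed

lemma rou_sum:
  assumes "K > 0"
  shows "(\<Sum>k<K. (rou K ^ j) ^ k) = (if K dvd j then of_nat K else 0)"
proof (cases "K dvd j")
  case True then show ?thesis using rou_pow_eq_1_iff[OF assms, of j] by simp
next
  case False
  then have ne: "rou K ^ j \<noteq> 1" using rou_pow_eq_1_iff[OF assms] by simp
  have "(rou K ^ j) ^ K = 1"
    by (metis assms dvd_triv_left power_mult rou_pow_eq_1_iff mult.commute)
  moreover have "\<And>x::complex. x \<noteq> 1 \<Longrightarrow> x ^ K = 1 \<Longrightarrow> (\<Sum>k<K. x ^ k) = 0"
    by (simp add: sum_gp_strict)
  ultimately have "(\<Sum>k<K. (rou K ^ j) ^ k) = 0" using ne by blast
  then show ?thesis using False by (simp only: if_False)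
qed

lemma rou_dvd_iff:
  fixes n m K :: nat
  assumes "m < K"
  shows "K dvd (n + K - m) \<longleftrightarrow> n mod K = m"
proof -
  define r where "r = n mod K"
  define c where "c = n div K"
  have n: "n = c * K + r" by (simp add: r_def c_def)
  have r: "r < K" using assms by (simp add: r_def)
  have e: "n + K - m = c * K + (r + K - m)" using n assms by simp
  have "K dvd (n + K - m) \<longleftrightarrow> K dvd (r + K - m)"
    unfolding e by (simp add: dvd_add_right_iff)
  also have "\<dots> \<longleftrightarrow> r = m"
  proof
    assume d: "K dvd (r + K - m)"
    have "0 < r + K - m" "r + K - m < 2 * K" using r assms by auto
    moreover obtain c' where c': "r + K - m = K * c'" using d by (auto elim: dvdE)
    ultimately have "K * c' < K * 2" "c' \<noteq> 0" by auto
    then have "c' < 2" "c' \<noteq> 0" by simp_all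
    then have "c' = 1" by simp
    then have "r + K - m = K" using c' by simp
    then show "r = m" using assms by simp
  next
    assume "r = m" then show "K dvd (r + K - m)" by simp
  qed
  finally show ?thesis by (simp only: r_def)
qed

lemma one_dim:
  fixes h :: "complex \<Rightarrow> complex"
  assumes hol: "h holomorphic_on ball 0 R" and s: "1 < s" "s < R"
    and bnd: "\<And>w. w \<in> ball 0 R \<Longrightarrow> norm (h w) \<le> M" and K: "K > 0" and z: "norm z \<le> 1"
  shows "norm (h z - (\<Sum>m<K. (\<Sum>k<K. h (rou K ^ k) * (rou K ^ k) ^ (K - m)) / of_nat K * z ^ m))
           \<le> 2 * M * (1/s) ^ K / (1 - 1/s)"
proof -
  define a where "a n = (deriv ^^ n) h 0 / fact n" for n
  define q where "q = 1/s"
  define \<omega> where "\<omega> = rou K"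
  have q: "0 < q" "q < 1" using s by (auto simp: q_def)
  have M0: "0 \<le> M" using bnd[of 0] s by (auto intro: order_trans[OF norm_ge_zero])
  have acoef: "norm (a n) \<le> M * q ^ n" for n
  proof -
    have "norm ((deriv ^^ n) h 0) \<le> fact n * M / s ^ n"
    proof (rule Cauchy_inequality)
      show "h holomorphic_on ball 0 s" using hol s by (auto elim: holomorphic_on_subset)
      have "cball 0 s \<subseteq> ball (0::complex) R" using s by auto
      then show "continuous_on (cball 0 s) h"
        using holomorphic_on_imp_continuous_on hol continuous_on_subset by blast
      show "0 < s" using s by simp
      show "norm (h x) \<le> M" if "norm (0 - x) = s" for x
        using bnd that s by auto
    qed
    moreover have "norm (a n) = norm ((deriv ^^ n) h 0) / fact n"
      by (simp add: a_def norm_divide)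
    ultimately have "norm (a n) \<le> (fact n * M / s ^ n) / fact n"
      by (metis divide_right_mono fact_ge_zero)
    also have "\<dots> = M * q ^ n" by (simp add: q_def power_one_over)
    finally show ?thesis .
  qed
  have ser: "(\<lambda>n. a n * w ^ n) sums h w" if "norm w < R" for w
    using holomorphic_power_series[OF hol, of w] that by (simp add: a_def)
  have R1: "1 < R" using s by simp
  have S: "(\<lambda>n. a n * z ^ (n mod K)) sums
       (\<Sum>m<K. (\<Sum>k<K. h (\<omega> ^ k) * (\<omega> ^ k) ^ (K - m)) / of_nat K * z ^ m)"
  proof -
    have "(\<lambda>n. \<Sum>m<K. (\<Sum>k<K. a n * (\<omega> ^ k) ^ n * (\<omega> ^ k) ^ (K - m)) / of_nat K * z ^ m) sums
       (\<Sum>m<K. (\<Sum>k<K. h (\<omega> ^ k) * (\<omega> ^ k) ^ (K - m)) / of_nat K * z ^ m)"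
    proof -
      have T: "(\<lambda>n. a n * (\<omega> ^ k) ^ n * (\<omega> ^ k) ^ (K - m)) sums (h (\<omega> ^ k) * (\<omega> ^ k) ^ (K - m))" for m k
      proof -
        have "norm (\<omega> ^ k) < R" using R1 by (simp add: \<omega>_def)
        from sums_mult2[OF ser[OF this], of "(\<omega> ^ k) ^ (K - m)"] show ?thesis .
      qed
      have "(\<lambda>n. (\<Sum>k<K. a n * (\<omega> ^ k) ^ n * (\<omega> ^ k) ^ (K - m)) / of_nat K * z ^ m) sums
            ((\<Sum>k<K. h (\<omega> ^ k) * (\<omega> ^ k) ^ (K - m)) / of_nat K * z ^ m)" for m
        by (intro sums_mult2 sums_divide sums_sum T)
      then show ?thesis by (rule sums_sum)
    qed
    moreover have "(\<Sum>m<K. (\<Sum>k<K. a n * (\<omega> ^ k) ^ n * (\<omega> ^ k) ^ (K - m)) / of_nat K * z ^ m)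
                   = a n * z ^ (n mod K)" for n
    proof -
      have "(\<Sum>k<K. a n * (\<omega> ^ k) ^ n * (\<omega> ^ k) ^ (K - m)) = a n * (\<Sum>k<K. (\<omega> ^ (n + K - m)) ^ k)"
        if "m < K" for m
      proof -
        have "(\<omega> ^ k) ^ n * (\<omega> ^ k) ^ (K - m) = (\<omega> ^ (n + K - m)) ^ k" for k
        proof -
          have "n + K - m = n + (K - m)" using that by simp
          then have "k * n + k * (K - m) = k * (n + K - m)" by (simp add: distrib_left)
          then show ?thesis by (simp add: power_add[symmetric] power_mult[symmetric] mult.commute)
        qed
        then show ?thesis by (simp add: sum_distrib_left mult.assoc)
      qed
      then have "(\<Sum>m<K. (\<Sum>k<K. a n * (\<omega> ^ k) ^ n * (\<omega> ^ k) ^ (K - m)) / of_nat K * z ^ m)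
           = (\<Sum>m<K. (if m = n mod K then a n * z ^ m else 0))"
        using K by (intro sum.cong) (auto simp: \<omega>_def rou_sum rou_dvd_iff)
      also have "\<dots> = a n * z ^ (n mod K)" using K by (simp add: sum.delta')
      finally show ?thesis .
    qed
    ultimately show ?thesis by simp
  qed
  define f where "f n = a n * z ^ n - a n * z ^ (n mod K)" for n
  define S0 where "S0 = (\<Sum>m<K. (\<Sum>k<K. h (\<omega> ^ k) * (\<omega> ^ k) ^ (K - m)) / of_nat K * z ^ m)"
  have fs: "f sums (h z - S0)"
  proof -
    have "norm z < R" using z R1 by simp
    from sums_diff[OF ser[OF this] S] show ?thesis unfolding f_def S0_def .
  qed
  define g where "g n = (if n < K then 0 else 2 * M * q ^ n)" for n
  have fg: "norm (f n) \<le> g n" for n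
  proof (cases "n < K")
    case True then show ?thesis by (simp add: f_def g_def)
  next
    case False
    have "norm (z ^ n - z ^ (n mod K)) \<le> norm (z ^ n) + norm (z ^ (n mod K))" by (rule norm_triangle_ineq4)
    also have "\<dots> \<le> 2"
    proof -
      have "norm (z ^ n) \<le> 1" "norm (z ^ (n mod K)) \<le> 1"
        using z by (simp_all add: norm_power power_le_one)
      then show ?thesis by linarith
    qed
    finally have 2: "norm (z ^ n - z ^ (n mod K)) \<le> 2" .
    have "norm (f n) = norm (a n) * norm (z ^ n - z ^ (n mod K))"
      by (simp add: f_def norm_mult[symmetric] right_diff_distrib)
    also have "\<dots> \<le> (M * q ^ n) * 2"
    proof (rule mult_mono[OF acoef 2])
      show "0 \<le> M * q ^ n" using M0 q by simp
    qed simp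
    finally show ?thesis using False by (simp add: g_def)
  qed
  have gs: "g sums (2 * M * q ^ K / (1 - q))"
  proof -
    have "(\<lambda>i. g (i + K)) sums (2 * M * q ^ K * (1 / (1 - q)))"
    proof -
      have "g (i + K) = 2 * M * q ^ K * q ^ i" for i by (simp add: g_def power_add)
      then show ?thesis using sums_mult[OF geometric_sums[of q], of "2 * M * q ^ K"] q by simp
    qed
    moreover have "(\<Sum>i<K. g i) = 0" by (simp add: g_def)
    ultimately show ?thesis using sums_iff_shift[of g K] by simp
  qed
  have sn: "summable (\<lambda>n. norm (f n))"
    by (rule summable_comparison_test'[OF sums_summable[OF gs]]) (use fg in auto)
  have "norm (h z - S0) = norm (suminf f)" using fs by (simp add: sums_iff)
  also have "\<dots> \<le> (\<Sum>n. norm (f n))" by (rule summable_norm[OF sn])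
  also have "\<dots> \<le> suminf g" by (rule suminf_le[OF fg sn sums_summable[OF gs]])
  also have "\<dots> = 2 * M * q ^ K / (1 - q)" using gs by (simp add: sums_iff)
  finally show ?thesis unfolding S0_def q_def \<omega>_def .
qed



lemma poly_const: "(\<lambda>z. c) \<in> poly_funs"
  unfolding poly_funs_def
  by (rule CollectI, rule exI[of _ "[(c, [])]"]) (simp add: monomial_fun_def)

lemma poly_add:
  assumes "p \<in> poly_funs" "q \<in> poly_funs"
  shows "(\<lambda>z. p z + q z) \<in> poly_funs"
proof -
  obtain ms1 ms2 where "p = (\<lambda>z. sum_list (map (\<lambda>(c, xs). monomial_fun c xs z) ms1))"
    "q = (\<lambda>z. sum_list (map (\<lambda>(c, xs). monomial_fun c xs z) ms2))"
    using assms unfolding poly_funs_def by blast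
  then show ?thesis unfolding poly_funs_def
    by (intro CollectI exI[of _ "ms1 @ ms2"]) simp
qed

lemma poly_mult_coord:
  assumes "p \<in> poly_funs"
  shows "(\<lambda>z. p z * z i ^ m) \<in> poly_funs"
proof -
  obtain ms where p: "p = (\<lambda>z. sum_list (map (\<lambda>(c, xs). monomial_fun c xs z) ms))"
    using assms unfolding poly_funs_def by blast
  have "sum_list (map (\<lambda>(c, xs). monomial_fun c xs z) ms) * z i ^ m =
        sum_list (map (\<lambda>(c, xs). monomial_fun c xs z) (map (\<lambda>(c, xs). (c, (i, m) # xs)) ms))" for z
    by (induction ms) (auto simp: monomial_fun_def algebra_simps)
  then show ?thesis unfolding poly_funs_def p
    by (intro CollectI exI[of _ "map (\<lambda>(c, xs). (c, (i, m) # xs)) ms"]) simp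
qed

lemma poly_sum:
  assumes "\<And>m. m < K \<Longrightarrow> p m \<in> poly_funs"
  shows "(\<lambda>z. \<Sum>m<K. p m z * z i ^ m) \<in> poly_funs"
  using assms
proof (induction K)
  case 0 then show ?case using poly_const[of 0] by simp
next
  case (Suc K)
  have "(\<lambda>z. (\<Sum>m<K. p m z * z i ^ m) + p K z * z i ^ K) \<in> poly_funs"
    using Suc by (intro poly_add poly_mult_coord) auto
  then show ?case by simp
qed

lemma poly_repr:
  assumes "p \<in> poly_funs"
  obtains ms where "p = (\<lambda>z. sum_list (map (\<lambda>(c, xs). monomial_fun c xs z) ms))"
  using assms unfolding poly_funs_def by blast

lemma poly_slice_holo:
  assumes "p \<in> poly_funs"
  shows "(\<lambda>w. p (z(i := w))) holomorphic_on UNIV"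
proof -
  obtain ms where p: "p = (\<lambda>z. sum_list (map (\<lambda>(c, xs). monomial_fun c xs z) ms))"
    using assms by (rule poly_repr)
  have mono: "(\<lambda>w. prod_list (map (\<lambda>(j, k). (z(i := w)) j ^ k) xs)) holomorphic_on UNIV" for xs :: "('a \<times> nat) list"
  proof (induction xs)
    case Nil then show ?case by simp
  next
    case (Cons a xs)
    obtain j k where a: "a = (j, k)" by (cases a)
    have "(\<lambda>w. (if j = i then w else z j) ^ k * prod_list (map (\<lambda>(j, k). (z(i := w)) j ^ k) xs)) holomorphic_on UNIV"
      by (intro holomorphic_intros Cons) (cases "j = i"; simp add: holomorphic_intros)
    then show ?case by (simp add: a)
  qed
  show ?thesis unfolding p
  proof (induction ms)
    case Nil then show ?case by simp
  next
    case (Cons a ms)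
    obtain c xs where a: "a = (c, xs)" by (cases a)
    show ?case using Cons mono[of xs]
      by (simp add: a monomial_fun_def holomorphic_intros)
  qed
qed

lemma poly_cont:
  assumes "p \<in> poly_funs"
  shows "continuous_on UNIV p"
proof -
  obtain ms where p: "p = (\<lambda>z. sum_list (map (\<lambda>(c, xs). monomial_fun c xs z) ms))"
    using assms by (rule poly_repr)
  have mono: "continuous_on UNIV (\<lambda>z::'a \<Rightarrow> complex. prod_list (map (\<lambda>(j, k). z j ^ k) xs))" for xs :: "('a \<times> nat) list"
  proof (induction xs)
    case Nil then show ?case by simp
  next
    case (Cons a xs)
    obtain j k where a: "a = (j, k)" by (cases a)
    have "continuous_on UNIV (\<lambda>z::'a \<Rightarrow> complex. z j ^ k * prod_list (map (\<lambda>(j, k). z j ^ k) xs))"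
      by (intro continuous_intros Cons continuous_on_power continuous_on_product_coordinates)
    then show ?case by (simp add: a)
  qed
  show ?thesis unfolding p
  proof (induction ms)
    case Nil then show ?case by simp
  next
    case (Cons a ms)
    obtain c xs where a: "a = (c, xs)" by (cases a)
    show ?case using Cons mono[of xs]
      by (simp add: a monomial_fun_def continuous_intros)
  qed
qed



lemma polydisc_upd: "z \<in> polydisc \<Longrightarrow> norm w \<le> 1 \<Longrightarrow> z(i := w) \<in> polydisc"
  by (simp add: polydisc_def)

lemma polydisc_norm: "z \<in> polydisc \<Longrightarrow> norm (z i) \<le> 1"
  by (simp add: polydisc_def)

lemma fin_approx:
  fixes M r :: real and F :: "'a set"
  assumes "finite F" "0 < r" "r < 1"
  shows "\<And>G \<epsilon>. (\<forall>z z'. (\<forall>i\<in>F. z i = z' i) \<longrightarrow> G z = G z') \<Longrightarrow>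
     (\<forall>i\<in>F. \<forall>z\<in>polydisc. (\<lambda>w. G (z(i := w))) holomorphic_on ball 0 (1/r) \<and>
        (\<forall>w\<in>ball 0 (1/r). norm (G (z(i := w))) \<le> M)) \<Longrightarrow> \<epsilon> > 0 \<Longrightarrow>
     \<exists>p\<in>poly_funs. \<forall>z\<in>polydisc. norm (G z - p z) < \<epsilon>"
  using assms(1)
proof (induction F rule: finite_induct)
  case empty
  fix G :: "('a \<Rightarrow> complex) \<Rightarrow> complex" and \<epsilon> :: real
  assume G: "\<forall>z z'. (\<forall>i\<in>{}. z i = z' i) \<longrightarrow> G z = G z'" and "\<epsilon> > 0"
  have Gc: "G z = G undefined" for z using G by blast
  show "\<exists>p\<in>poly_funs. \<forall>z\<in>polydisc. norm (G z - p z) < \<epsilon>"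
  proof (intro bexI[of _ "\<lambda>z. G undefined"] ballI)
    fix z show "norm (G z - G undefined) < \<epsilon>" using Gc[of z] \<open>\<epsilon> > 0\<close> by simp
  qed (rule poly_const)
next
  case (insert i F0)
  fix G :: "('a \<Rightarrow> complex) \<Rightarrow> complex" and \<epsilon> :: real
  assume dep: "\<forall>z z'. (\<forall>i\<in>insert i F0. z i = z' i) \<longrightarrow> G z = G z'"
    and hb: "\<forall>j\<in>insert i F0. \<forall>z\<in>polydisc. (\<lambda>w. G (z(j := w))) holomorphic_on ball 0 (1/r) \<and>
        (\<forall>w\<in>ball 0 (1/r). norm (G (z(j := w))) \<le> M)"
    and eps: "\<epsilon> > 0"
  define s where "s = (1 + 1/r) / 2"
  have r1: "1 < 1/r" using assms by simp
  have s: "1 < s" "s < 1/r" using r1 by (auto simp: s_def)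
  have z0: "(\<lambda>_. 0) \<in> polydisc" by (simp add: polydisc_def)
  have M0: "0 \<le> M" using hb z0 r1
    by (metis insertI1 centre_in_ball norm_ge_zero order_trans zero_less_one less_trans)
  have "(\<lambda>K. 2 * M * (1/s) ^ K / (1 - 1/s)) \<longlonglongrightarrow> 2 * M * 0 / (1 - 1/s)"
    using s by (intro tendsto_intros LIMSEQ_power_zero) auto
  then have "eventually (\<lambda>K. 2 * M * (1/s) ^ K / (1 - 1/s) < \<epsilon>/2) sequentially"
    using eps by (intro order_tendstoD) auto
  then obtain K where K: "K > 0" "2 * M * (1/s) ^ K / (1 - 1/s) < \<epsilon>/2"
    unfolding eventually_sequentially by (metis le_add2 add_gr_0 zero_less_one)
  define \<omega> where "\<omega> = rou K"
  have nw: "norm (\<omega> ^ k) = 1" for k unfolding \<omega>_def by (rule norm_rou_pow)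
  have nw2: "norm ((\<omega> ^ k) ^ n) = 1" for k n using nw[of "k*n"] by (simp only: power_mult)
  define c where "c m z = (\<Sum>k<K. G (z(i := \<omega> ^ k)) * (\<omega> ^ k) ^ (K - m)) / of_nat K" for m z
  have cdep: "\<forall>z z'. (\<forall>i\<in>F0. z i = z' i) \<longrightarrow> c m z = c m z'" for m
  proof (intro allI impI)
    fix z z' :: "'a \<Rightarrow> complex" assume "\<forall>i\<in>F0. z i = z' i"
    then have "G (z(i := a)) = G (z'(i := a))" for a using dep by auto
    then show "c m z = c m z'" by (simp add: c_def)
  qed
  have chb: "\<forall>j\<in>F0. \<forall>z\<in>polydisc. (\<lambda>w. c m (z(j := w))) holomorphic_on ball 0 (1/r) \<and>
        (\<forall>w\<in>ball 0 (1/r). norm (c m (z(j := w))) \<le> M)" for m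
  proof (intro ballI conjI)
    fix j and z :: "'a \<Rightarrow> complex" assume j: "j \<in> F0" and z: "z \<in> polydisc"
    have ji: "j \<noteq> i" using j insert by auto
    have zk: "z(i := \<omega> ^ k) \<in> polydisc" for k using z nw by (intro polydisc_upd) auto
    have eq: "c m (z(j := w)) = (\<Sum>k<K. G ((z(i := \<omega> ^ k))(j := w)) * (\<omega> ^ k) ^ (K - m)) / of_nat K" for w
      unfolding c_def using ji by (simp add: fun_upd_twist)
    show "(\<lambda>w. c m (z(j := w))) holomorphic_on ball 0 (1/r)"
      unfolding eq using hb j zk by (intro holomorphic_intros) auto
    fix w :: complex assume w: "w \<in> ball 0 (1/r)"
    have "norm (\<Sum>k<K. G ((z(i := \<omega> ^ k))(j := w)) * (\<omega> ^ k) ^ (K - m)) \<le> (\<Sum>k<K. M)"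
    proof (rule sum_norm_le)
      fix k assume "k \<in> {..<K}"
      have "norm (G ((z(i := \<omega> ^ k))(j := w))) \<le> M" using hb j zk w by blast
      then show "norm (G ((z(i := \<omega> ^ k))(j := w)) * (\<omega> ^ k) ^ (K - m)) \<le> M"
        by (simp only: norm_mult nw2 mult_1_right)
    qed
    then show "norm (c m (z(j := w))) \<le> M"
      unfolding eq using K by (simp add: norm_divide field_simps)
  qed
  have "\<forall>m. \<exists>p\<in>poly_funs. \<forall>z\<in>polydisc. norm (c m z - p z) < \<epsilon> / (2 * K)"
    using insert.IH[OF cdep chb] eps K by auto
  then obtain p where p: "\<And>m. p m \<in> poly_funs" "\<And>m z. z \<in> polydisc \<Longrightarrow> norm (c m z - p m z) < \<epsilon> / (2 * K)"
    by metis
  show "\<exists>p\<in>poly_funs. \<forall>z\<in>polydisc. norm (G z - p z) < \<epsilon>"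
  proof (intro bexI ballI)
    show "(\<lambda>z. \<Sum>m<K. p m z * z i ^ m) \<in> poly_funs" using p(1) by (intro poly_sum)
    fix z :: "'a \<Rightarrow> complex" assume z: "z \<in> polydisc"
    have hol: "(\<lambda>w. G (z(i := w))) holomorphic_on ball 0 (1/r)" using hb z by auto
    have bd: "\<And>w. w \<in> ball 0 (1/r) \<Longrightarrow> norm (G (z(i := w))) \<le> M" using hb z by auto
    have e1: "norm (G z - (\<Sum>m<K. c m z * z i ^ m)) \<le> 2 * M * (1/s) ^ K / (1 - 1/s)"
      using one_dim[OF hol s bd K(1) polydisc_norm[OF z, of i]]
      by (simp add: c_def \<omega>_def)
    have "norm ((\<Sum>m<K. c m z * z i ^ m) - (\<Sum>m<K. p m z * z i ^ m)) \<le> (\<Sum>m<K. \<epsilon> / (2 * K))"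
      unfolding sum_subtractf[symmetric]
    proof (rule sum_norm_le)
      fix m assume "m \<in> {..<K}"
      have "norm (c m z * z i ^ m - p m z * z i ^ m) = norm (c m z - p m z) * norm (z i) ^ m"
        by (simp add: norm_mult norm_power left_diff_distrib[symmetric])
      also have "\<dots> \<le> norm (c m z - p m z) * 1"
        using polydisc_norm[OF z] by (intro mult_left_mono power_le_one) auto
      also have "\<dots> \<le> \<epsilon> / (2 * K)" using p(2)[OF z, of m] by simp
      finally show "norm (c m z * z i ^ m - p m z * z i ^ m) \<le> \<epsilon> / (2 * K)" .
    qed
    also have "\<dots> = \<epsilon> / 2" using K by simp
    finally have e2: "norm ((\<Sum>m<K. c m z * z i ^ m) - (\<Sum>m<K. p m z * z i ^ m)) \<le> \<epsilon> / 2" .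
    have "norm (G z - (\<Sum>m<K. p m z * z i ^ m)) \<le>
        norm (G z - (\<Sum>m<K. c m z * z i ^ m)) + norm ((\<Sum>m<K. c m z * z i ^ m) - (\<Sum>m<K. p m z * z i ^ m))"
      using norm_triangle_ineq[of "G z - (\<Sum>m<K. c m z * z i ^ m)" "(\<Sum>m<K. c m z * z i ^ m) - (\<Sum>m<K. p m z * z i ^ m)"]
      by (simp only: add_diff_eq diff_add_cancel)
    then show "norm (G z - (\<Sum>m<K. p m z * z i ^ m)) < \<epsilon>" using e1 e2 K by linarith
  qed
qed



lemma polydisc_compact: "compact (polydisc :: ('i \<Rightarrow> complex) set)"
proof -
  have eq: "(polydisc :: ('i \<Rightarrow> complex) set) = PiE UNIV (\<lambda>_::'i. cball (0::complex) 1)"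
    by (auto simp: polydisc_def PiE_UNIV_domain)
  have "compactin (product_topology (\<lambda>_::'i. (euclidean :: complex topology)) UNIV) (PiE UNIV (\<lambda>_::'i. cball (0::complex) 1))"
    by (simp add: compactin_PiE)
  then show ?thesis unfolding eq euclidean_product_topology by simp
qed

lemma reduce:
  fixes f :: "('i \<Rightarrow> complex) \<Rightarrow> complex"
  assumes cont: "continuous_on polydisc f" and e: "\<epsilon> > 0"
  shows "\<exists>F r. finite F \<and> 0 < r \<and> r < 1 \<and>
    (\<forall>z\<in>polydisc. norm (f z - f (\<lambda>i. if i \<in> F then complex_of_real r * z i else 0)) < \<epsilon>)"
proof -
  have loc: "\<exists>Fx \<delta>. finite Fx \<and> \<delta> > 0 \<and>
      (\<forall>y\<in>polydisc. (\<forall>i\<in>Fx. norm (y i - x i) < \<delta>) \<longrightarrow> norm (f y - f x) < \<epsilon>/2)"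
    if x: "x \<in> polydisc" for x
  proof -
    obtain A where A: "open A" "A \<inter> polydisc = f -` ball (f x) (\<epsilon>/2) \<inter> polydisc"
      using cont unfolding continuous_on_open_invariant by (meson open_ball)
    have xA: "x \<in> A" using A(2) x e by auto
    have "openin (product_topology (\<lambda>i. euclidean) UNIV) A" using A(1) by (simp add: open_fun_def)
    from product_topology_open_contains_basis[OF this xA]
    have "\<exists>X. x \<in> PiE UNIV X \<and> (\<forall>i. openin euclidean (X i)) \<and> finite {i. X i \<noteq> topspace euclidean} \<and>
         PiE UNIV X \<subseteq> A" by simp
    then obtain X where
      X0: "x \<in> PiE UNIV X \<and> (\<forall>i. openin euclidean (X i)) \<and> finite {i. X i \<noteq> topspace euclidean} \<and>
         PiE UNIV X \<subseteq> A" ..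
    note X = conjunct1[OF X0] conjunct1[OF conjunct2[OF X0]] conjunct1[OF conjunct2[OF conjunct2[OF X0]]]
       conjunct2[OF conjunct2[OF conjunct2[OF X0]]]
    define Fx where "Fx = {i. X i \<noteq> UNIV}"
    have fin: "finite Fx" using X(3) unfolding Fx_def topspace_euclidean .
    have "\<exists>e>0. ball (x i) e \<subseteq> X i" if "i \<in> Fx" for i
    proof -
      have "open (X i)" using X(2) by (metis open_openin)
      moreover have "x i \<in> X i" using X(1) by (auto simp: PiE_iff)
      ultimately show ?thesis by (simp add: open_contains_ball)
    qed
    then obtain e where ee: "\<And>i. i \<in> Fx \<Longrightarrow> e i > 0 \<and> ball (x i) (e i) \<subseteq> X i" by metis
    define \<delta> where "\<delta> = Min (insert 1 (e ` Fx))"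
    have \<delta>: "\<delta> > 0" using fin ee by (simp add: \<delta>_def)
    have \<delta>le: "\<delta> \<le> e i" if "i \<in> Fx" for i using fin that by (simp add: \<delta>_def)
    show ?thesis
    proof (intro exI conjI ballI impI)
      show "finite Fx" "\<delta> > 0" by fact+
      fix y assume y: "y \<in> polydisc" and yc: "\<forall>i\<in>Fx. norm (y i - x i) < \<delta>"
      have "y \<in> PiE UNIV X"
      proof (auto simp: PiE_iff)
        fix i show "y i \<in> X i"
        proof (cases "i \<in> Fx")
          case True
          have "norm (y i - x i) < e i" using yc \<delta>le[OF True] True by force
          then have "dist (x i) (y i) < e i" by (simp add: dist_norm norm_minus_commute)
          then show ?thesis using ee[OF True] by auto
        next
          case False then show ?thesis by (simp add: Fx_def)
        qed
      qed
      then have "y \<in> A \<inter> polydisc" using X(4) y by auto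
      then have "dist (f y) (f x) < \<epsilon>/2" using A(2) by (auto simp: dist_commute)
      then show "norm (f y - f x) < \<epsilon>/2" by (simp add: dist_norm)
    qed
  qed
  then obtain Fx \<delta> where FD: "\<And>x. x \<in> polydisc \<Longrightarrow> finite (Fx x) \<and> \<delta> x > 0 \<and>
      (\<forall>y\<in>polydisc. (\<forall>i\<in>Fx x. norm (y i - x i) < \<delta> x) \<longrightarrow> norm (f y - f x) < \<epsilon>/2)"
    by metis
  define V where "V x = (\<Inter>i\<in>Fx x. (\<lambda>y. y i) -` ball (x i) (\<delta> x / 2))" for x :: "'i \<Rightarrow> complex"
  have opn: "open (V x)" if "x \<in> polydisc" for x :: "'i \<Rightarrow> complex"
    unfolding V_def using FD[OF that]
    by (intro open_INT ballI open_vimage open_ball continuous_on_product_coordinates) auto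
  have cov: "polydisc \<subseteq> (\<Union>x\<in>polydisc. V x)"
  proof
    fix x :: "'i \<Rightarrow> complex" assume "x \<in> polydisc"
    moreover then have "x \<in> V x" using FD[of x] by (auto simp: V_def)
    ultimately show "x \<in> (\<Union>x\<in>polydisc. V x)" by blast
  qed
  obtain C where C: "C \<subseteq> polydisc" "finite C" "polydisc \<subseteq> (\<Union>x\<in>C. V x)"
    using compactE_image[OF polydisc_compact opn cov] by metis
  define F where "F = (\<Union>x\<in>C. Fx x)"
  have finF: "finite F" unfolding F_def using C FD by auto
  define d where "d = Min (insert 1 ((\<lambda>x. \<delta> x / 2) ` C))"
  have d: "d > 0" "d \<le> 1" using C FD by (auto simp: d_def)
  have dle: "d \<le> \<delta> x / 2" if "x \<in> C" for x unfolding d_def using C that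
    by (intro Min_le) auto
  define r where "r = 1 - d / 2"
  have r: "0 < r" "r < 1" using d by (auto simp: r_def)
  show ?thesis
  proof (intro exI conjI ballI)
    show "finite F" "0 < r" "r < 1" by fact+
    fix z :: "'i \<Rightarrow> complex" assume z: "z \<in> polydisc"
    define y where "y = (\<lambda>i. if i \<in> F then complex_of_real r * z i else 0)"
    obtain x where x: "x \<in> C" "z \<in> V x" using C(3) z by auto
    have xp: "x \<in> polydisc" using x C by auto
    have y: "y \<in> polydisc"
    proof -
      have "norm (y i) \<le> 1" for i
      proof -
        have "norm (complex_of_real r * z i) \<le> 1 * 1"
          using polydisc_norm[OF z, of i] r by (simp add: norm_mult mult_le_one)
        then show ?thesis by (simp add: y_def)
      qed
      then show ?thesis by (simp add: polydisc_def)
    qed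
    have zi: "norm (z i - x i) < \<delta> x / 2" if "i \<in> Fx x" for i
      using x(2) that by (auto simp: V_def dist_norm norm_minus_commute)
    have 1: "norm (f z - f x) < \<epsilon>/2"
      using FD[OF xp] z zi by (smt (verit, best) field_sum_of_halves)
    have 2: "norm (f y - f x) < \<epsilon>/2"
    proof -
      have "norm (y i - x i) < \<delta> x" if i: "i \<in> Fx x" for i
      proof -
        have iF: "i \<in> F" using i x by (auto simp: F_def)
        have "y i - z i = complex_of_real (r - 1) * z i" using iF by (simp add: y_def algebra_simps)
        then have "norm (y i - z i) = \<bar>r - 1\<bar> * norm (z i)" by (simp only: norm_mult norm_of_real)
        also have "\<dots> = (1 - r) * norm (z i)" using r by simp
        finally have "norm (y i - z i) = (1 - r) * norm (z i)" .
        also have "\<dots> \<le> (1 - r) * 1" using polydisc_norm[OF z, of i] r by (intro mult_left_mono) auto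
        also have "\<dots> = d / 2" by (simp add: r_def)
        also have "\<dots> < \<delta> x / 2" using dle[OF x(1)] d by simp
        finally have "norm (y i - z i) < \<delta> x / 2" .
        moreover have "norm (y i - x i) \<le> norm (y i - z i) + norm (z i - x i)"
          by (metis norm_triangle_ineq add_diff_eq diff_add_cancel)
        ultimately show ?thesis using zi[OF i] by linarith
      qed
      then show ?thesis using FD[OF xp] y by blast
    qed
    have "norm (f z - f y) \<le> norm (f z - f x) + norm (f y - f x)"
      by (metis norm_triangle_ineq4 diff_diff_eq2 add_diff_eq diff_add_cancel norm_minus_commute norm_triangle_sub)
    then show "norm (f z - f y) < \<epsilon>" using 1 2 by linarith
  qed
qed



lemma forward:
  fixes f :: "('i \<Rightarrow> complex) \<Rightarrow> complex"
  assumes p: "\<forall>n. p n \<in> poly_funs" and ul: "uniform_limit polydisc p f sequentially"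
  shows "continuous_on polydisc f \<and> (\<forall>i0. \<forall>z\<in>polydisc. (\<lambda>w. f (z(i0 := w))) \<in> disc_algebra)"
proof (intro conjI allI ballI)
  show "continuous_on polydisc f"
  proof (rule uniform_limit_theorem[OF _ ul])
    show "\<forall>\<^sub>F n in sequentially. continuous_on polydisc (p n)"
      using p by (intro always_eventually allI continuous_on_subset[OF poly_cont]) auto
  qed simp
  fix i0 and z :: "'i \<Rightarrow> complex" assume z: "z \<in> polydisc"
  have ul2: "uniform_limit (cball 0 1) (\<lambda>n w. p n (z(i0 := w))) (\<lambda>w. f (z(i0 := w))) sequentially"
    unfolding uniform_limit_sequentially_iff
  proof (intro allI impI)
    fix e :: real assume "e > 0"
    then obtain N where N: "\<forall>n\<ge>N. \<forall>x\<in>polydisc. dist (p n x) (f x) < e"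
      using ul unfolding uniform_limit_sequentially_iff by blast
    show "\<exists>N. \<forall>n\<ge>N. \<forall>x\<in>cball 0 1. dist (p n (z(i0 := x))) (f (z(i0 := x))) < e"
      using N z polydisc_upd[OF z] by (intro exI[of _ N]) auto
  qed
  have "\<forall>\<^sub>F n in sequentially. continuous_on (cball 0 1) (\<lambda>w. p n (z(i0 := w))) \<and>
          (\<lambda>w. p n (z(i0 := w))) holomorphic_on ball 0 1"
  proof (intro always_eventually allI conjI)
    fix n
    have h: "(\<lambda>w. p n (z(i0 := w))) holomorphic_on UNIV"
      using p by (intro poly_slice_holo) auto
    show "(\<lambda>w. p n (z(i0 := w))) holomorphic_on ball 0 1"
      using h by (rule holomorphic_on_subset) simp
    show "continuous_on (cball 0 1) (\<lambda>w. p n (z(i0 := w)))"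
      using holomorphic_on_imp_continuous_on[OF h] by (rule continuous_on_subset) simp
  qed
  from holomorphic_uniform_limit[OF this ul2]
  show "(\<lambda>w. f (z(i0 := w))) \<in> disc_algebra"
    unfolding disc_algebra_def by auto
qed

lemma backward:
  fixes f :: "('i \<Rightarrow> complex) \<Rightarrow> complex"
  assumes cont: "continuous_on polydisc f"
    and sl: "\<forall>i0. \<forall>z\<in>polydisc. (\<lambda>w. f (z(i0 := w))) \<in> disc_algebra"
    and e: "\<epsilon> > 0"
  shows "\<exists>p\<in>poly_funs. \<forall>z\<in>polydisc. norm (f z - p z) < \<epsilon>"
proof -
  have "compact (f ` polydisc)" by (intro compact_continuous_image cont polydisc_compact)
  then obtain M where M: "\<And>z. z \<in> polydisc \<Longrightarrow> norm (f z) \<le> M"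
    using compact_imp_bounded bounded_iff by (metis imageI)
  obtain F r where Fr: "finite F" "0 < r" "r < 1"
    and red: "\<forall>z\<in>polydisc. norm (f z - f (\<lambda>i. if i \<in> F then complex_of_real r * z i else 0)) < \<epsilon>/2"
    using reduce[OF cont, of "\<epsilon>/2"] e by auto
  define \<Phi> where "\<Phi> z = (\<lambda>i. if i \<in> F then complex_of_real r * z i else 0)" for z :: "'i \<Rightarrow> complex"
  define G where "G z = f (\<Phi> z)" for z
  have \<Phi>p: "\<Phi> z \<in> polydisc" if "z \<in> polydisc" for z
  proof -
    have "norm (\<Phi> z i) \<le> 1" for i
      using polydisc_norm[OF that, of i] Fr by (simp add: \<Phi>_def norm_mult mult_le_one)
    then show ?thesis by (simp add: polydisc_def)
  qed
  have dep: "\<forall>z z'. (\<forall>i\<in>F. z i = z' i) \<longrightarrow> G z = G z'"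
  proof (intro allI impI)
    fix z z' :: "'i \<Rightarrow> complex" assume "\<forall>i\<in>F. z i = z' i"
    then have "\<Phi> z = \<Phi> z'" by (auto simp: \<Phi>_def)
    then show "G z = G z'" by (simp add: G_def)
  qed
  have hb: "\<forall>i\<in>F. \<forall>z\<in>polydisc. (\<lambda>w. G (z(i := w))) holomorphic_on ball 0 (1/r) \<and>
        (\<forall>w\<in>ball 0 (1/r). norm (G (z(i := w))) \<le> M)"
  proof (intro ballI conjI)
    fix i and z :: "'i \<Rightarrow> complex" assume i: "i \<in> F" and z: "z \<in> polydisc"
    have eq: "G (z(i := w)) = f ((\<Phi> z)(i := complex_of_real r * w))" for w
    proof -
      have "\<Phi> (z(i := w)) = (\<Phi> z)(i := complex_of_real r * w)" using i by (auto simp: \<Phi>_def)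
      then show ?thesis by (simp add: G_def)
    qed
    have hol: "(\<lambda>u. f ((\<Phi> z)(i := u))) holomorphic_on ball 0 1"
      using sl \<Phi>p[OF z] unfolding disc_algebra_def by blast
    have img: "(\<lambda>w. complex_of_real r * w) ` ball 0 (1/r) \<subseteq> ball 0 1"
    proof
      fix u assume "u \<in> (\<lambda>w. complex_of_real r * w) ` ball 0 (1/r)"
      then obtain w where w: "norm w < 1/r" "u = complex_of_real r * w" by auto
      have "norm u = r * norm w" using w Fr by (simp add: norm_mult)
      also have "\<dots> < r * (1/r)" using w Fr by (intro mult_strict_left_mono) auto
      finally show "u \<in> ball 0 1" using Fr by simp
    qed
    have "((\<lambda>u. f ((\<Phi> z)(i := u))) \<circ> (\<lambda>w. complex_of_real r * w)) holomorphic_on ball 0 (1/r)"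
      by (rule holomorphic_on_compose_gen[OF _ hol img]) (intro holomorphic_intros)
    then show "(\<lambda>w. G (z(i := w))) holomorphic_on ball 0 (1/r)" by (simp add: eq o_def)
    fix w :: complex assume w: "w \<in> ball 0 (1/r)"
    have "complex_of_real r * w \<in> ball 0 1" using img w by blast
    then have "(\<Phi> z)(i := complex_of_real r * w) \<in> polydisc"
      by (intro polydisc_upd \<Phi>p z) auto
    then show "norm (G (z(i := w))) \<le> M" using M eq by simp
  qed
  obtain p where p: "p \<in> poly_funs" "\<forall>z\<in>polydisc. norm (G z - p z) < \<epsilon>/2"
    using fin_approx[OF Fr, of G M "\<epsilon>/2", OF dep hb] e by auto
  show ?thesis
  proof (intro bexI[OF _ p(1)] ballI)
    fix z :: "'i \<Rightarrow> complex" assume z: "z \<in> polydisc"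
    have 1: "norm (f z - G z) < \<epsilon>/2" using red z by (simp add: G_def \<Phi>_def)
    have 2: "norm (G z - p z) < \<epsilon>/2" using p z by auto
    have "norm (f z - p z) \<le> norm (f z - G z) + norm (G z - p z)"
      using norm_triangle_ineq[of "f z - G z" "G z - p z"] by (simp only: add_diff_eq diff_add_cancel)
    then show "norm (f z - p z) < \<epsilon>" using 1 2 by linarith
  qed
qed

theorem proposition3p1:
  fixes f :: "('i \<Rightarrow> complex) \<Rightarrow> complex"
  shows "(\<exists>p :: nat \<Rightarrow> ('i \<Rightarrow> complex) \<Rightarrow> complex.
            (\<forall>n. p n \<in> poly_funs) \<and> uniform_limit polydisc p f sequentially)
     \<longleftrightarrow> (continuous_on polydisc f \<and>
          (\<forall>i0. \<forall>z\<in>polydisc. (\<lambda>w. f (z(i0 := w))) \<in> disc_algebra))"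
proof
  assume "\<exists>p :: nat \<Rightarrow> ('i \<Rightarrow> complex) \<Rightarrow> complex.
            (\<forall>n. p n \<in> poly_funs) \<and> uniform_limit polydisc p f sequentially"
  then show "continuous_on polydisc f \<and> (\<forall>i0. \<forall>z\<in>polydisc. (\<lambda>w. f (z(i0 := w))) \<in> disc_algebra)"
    using forward by blast
next
  assume H: "continuous_on polydisc f \<and> (\<forall>i0. \<forall>z\<in>polydisc. (\<lambda>w. f (z(i0 := w))) \<in> disc_algebra)"
  have "\<forall>n. \<exists>q\<in>poly_funs. \<forall>z\<in>polydisc. norm (f z - q z) < inverse (real (Suc n))"
  proof
    fix n
    show "\<exists>q\<in>poly_funs. \<forall>z\<in>polydisc. norm (f z - q z) < inverse (real (Suc n))"
      using H by (intro backward) auto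
  qed
  then obtain p where p: "\<And>n. p n \<in> poly_funs"
    "\<And>n z. z \<in> polydisc \<Longrightarrow> norm (f z - p n z) < inverse (real (Suc n))"
    by metis
  have "uniform_limit polydisc p f sequentially"
    unfolding uniform_limit_sequentially_iff
  proof (intro allI impI)
    fix e :: real assume "e > 0"
    then obtain N where N: "inverse (real (Suc N)) < e" using reals_Archimedean by blast
    show "\<exists>N. \<forall>n\<ge>N. \<forall>x\<in>polydisc. dist (p n x) (f x) < e"
    proof (intro exI[of _ N] allI impI ballI)
      fix n and x :: "'i \<Rightarrow> complex" assume n: "N \<le> n" and x: "x \<in> polydisc"
      have "inverse (real (Suc n)) \<le> inverse (real (Suc N))"
        using n by (simp add: le_imp_inverse_le)
      moreover have "dist (p n x) (f x) = norm (f x - p n x)" by (simp add: dist_norm norm_minus_commute)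
      ultimately show "dist (p n x) (f x) < e"
        using p(2)[OF x, of n] N by linarith
    qed
  qed
  then show "\<exists>p :: nat \<Rightarrow> ('i \<Rightarrow> complex) \<Rightarrow> complex.
            (\<forall>n. p n \<in> poly_funs) \<and> uniform_limit polydisc p f sequentially"
    using p(1) by blast
qed


end
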